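(* Every sequentially distorted subset of a group is strongly bounded.
   Context: A subset $A$ of a group $G$ is sequentially distorted if there is a sequence $(w_n)_{n\in\mathbb N}\subset\mathbb N$ such that for every sequence $(a_n)_{n\in\mathbb N}\subset A$ there is a finite subset $S\subset G$ with $a_n\in S^{w_n}$ for all $n$, where $S^k=\{s_1\cdots s_k: s_i\in S\}$. A subset of $G$ is strongly bounded if it has finite diameter with respect to every left-invariant metric on $G$. *)

theory Defs
  imports Complex_Main "HOL-Algebra.Group"
begin

definition set_power :: "('a, 'b) monoid_scheme \<Rightarrow> 'a set \<Rightarrow> nat \<Rightarrow> 'a set" where
  "set_power G S k =
     {foldr (\<lambda>x y. x \<otimes>\<^bsub>G\<^esub> y) xs \<one>\<^bsub>G\<^esub> | xs. length xs = k \<and> set xs \<subseteq> S}"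

definition sequentially_distorted :: "('a, 'b) monoid_scheme \<Rightarrow> 'a set \<Rightarrow> bool" where
  "sequentially_distorted G A \<longleftrightarrow>
     (\<exists>w :: nat \<Rightarrow> nat. \<forall>a :: nat \<Rightarrow> 'a. (\<forall>n. a n \<in> A) \<longrightarrow>
        (\<exists>S. finite S \<and> S \<subseteq> carrier G \<and> (\<forall>n. a n \<in> set_power G S (w n))))"

definition left_invariant_metric :: "('a, 'b) monoid_scheme \<Rightarrow> ('a \<Rightarrow> 'a \<Rightarrow> real) \<Rightarrow> bool" where
  "left_invariant_metric G d \<longleftrightarrow>
     (\<forall>x\<in>carrier G. \<forall>y\<in>carrier G. 0 \<le> d x y \<and> (d x y = 0 \<longleftrightarrow> x = y) \<and> d x y = d y x) \<and>
     (\<forall>x\<in>carrier G. \<forall>y\<in>carrier G. \<forall>z\<in>carrier G. d x z \<le> d x y + d y z) \<and>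
     (\<forall>g\<in>carrier G. \<forall>x\<in>carrier G. \<forall>y\<in>carrier G. d (g \<otimes>\<^bsub>G\<^esub> x) (g \<otimes>\<^bsub>G\<^esub> y) = d x y)"

definition strongly_bounded :: "('a, 'b) monoid_scheme \<Rightarrow> 'a set \<Rightarrow> bool" where
  "strongly_bounded G A \<longleftrightarrow>
     (\<forall>d. left_invariant_metric G d \<longrightarrow> (\<exists>M::real. \<forall>x\<in>A. \<forall>y\<in>A. d x y \<le> M))"

end

theory Submission
  imports Defs
begin

lemma lim_tri: "left_invariant_metric G d \<Longrightarrow> x \<in> carrier G \<Longrightarrow> y \<in> carrier G \<Longrightarrow> z \<in> carrier G \<Longrightarrow> d x z \<le> d x y + d y z"
  unfolding left_invariant_metric_def by blast
lemma lim_sym: "left_invariant_metric G d \<Longrightarrow> x \<in> carrier G \<Longrightarrow> y \<in> carrier G \<Longrightarrow> d x y = d y x"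
  unfolding left_invariant_metric_def by blast
lemma lim_refl: "left_invariant_metric G d \<Longrightarrow> x \<in> carrier G \<Longrightarrow> d x x = 0"
  unfolding left_invariant_metric_def by blast
lemma lim_inv: "left_invariant_metric G d \<Longrightarrow> g \<in> carrier G \<Longrightarrow> x \<in> carrier G \<Longrightarrow> y \<in> carrier G \<Longrightarrow> d (g \<otimes>\<^bsub>G\<^esub> x) (g \<otimes>\<^bsub>G\<^esub> y) = d x y"
  unfolding left_invariant_metric_def by blast

lemma foldr_carrier:
  assumes "group G" "set xs \<subseteq> carrier G"
  shows "foldr (\<lambda>x y. x \<otimes>\<^bsub>G\<^esub> y) xs \<one>\<^bsub>G\<^esub> \<in> carrier G"
  using assms(2)
proof (induction xs)
  case Nil then show ?case using group.is_monoid[OF assms(1)] by (simp add: monoid.one_closed)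
next
  case (Cons a xs) then show ?case using group.is_monoid[OF assms(1)] by (simp add: monoid.m_closed)
qed

lemma foldr_bound:
  assumes G: "group G" and d: "left_invariant_metric G d" and S: "S \<subseteq> carrier G"
    and c: "\<And>s. s \<in> S \<Longrightarrow> d \<one>\<^bsub>G\<^esub> s \<le> c"
  shows "set xs \<subseteq> S \<Longrightarrow> d \<one>\<^bsub>G\<^esub> (foldr (\<lambda>x y. x \<otimes>\<^bsub>G\<^esub> y) xs \<one>\<^bsub>G\<^esub>) \<le> real (length xs) * c"
proof (induction xs)
  case Nil
  have "\<one>\<^bsub>G\<^esub> \<in> carrier G" using group.is_monoid[OF G] by (rule monoid.one_closed)
  then show ?case using lim_refl[OF d] by simp
next
  case (Cons s xs)
  define p where "p = foldr (\<lambda>x y. x \<otimes>\<^bsub>G\<^esub> y) xs \<one>\<^bsub>G\<^esub>"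
  have M: "monoid G" using group.is_monoid[OF G] .
  have sC: "s \<in> carrier G" using Cons.prems S by auto
  have pC: "p \<in> carrier G" unfolding p_def using foldr_carrier[OF G] Cons.prems S by auto
  have oC: "\<one>\<^bsub>G\<^esub> \<in> carrier G" using M by (rule monoid.one_closed)
  have spC: "s \<otimes>\<^bsub>G\<^esub> p \<in> carrier G" using M sC pC by (rule monoid.m_closed)
  have "d \<one>\<^bsub>G\<^esub> (s \<otimes>\<^bsub>G\<^esub> p) \<le> d \<one>\<^bsub>G\<^esub> s + d s (s \<otimes>\<^bsub>G\<^esub> p)"
    using lim_tri[OF d oC sC spC] .
  also have "d s (s \<otimes>\<^bsub>G\<^esub> p) = d (s \<otimes>\<^bsub>G\<^esub> \<one>\<^bsub>G\<^esub>) (s \<otimes>\<^bsub>G\<^esub> p)"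
    using monoid.r_one[OF M sC] by simp
  also have "\<dots> = d \<one>\<^bsub>G\<^esub> p" using lim_inv[OF d sC oC pC] .
  finally have "d \<one>\<^bsub>G\<^esub> (s \<otimes>\<^bsub>G\<^esub> p) \<le> d \<one>\<^bsub>G\<^esub> s + d \<one>\<^bsub>G\<^esub> p" .
  moreover have "d \<one>\<^bsub>G\<^esub> p \<le> real (length xs) * c" using Cons unfolding p_def by auto
  moreover have "d \<one>\<^bsub>G\<^esub> s \<le> c" using c Cons.prems by auto
  ultimately have "d \<one>\<^bsub>G\<^esub> (s \<otimes>\<^bsub>G\<^esub> p) \<le> real (Suc (length xs)) * c"
    by (simp add: algebra_simps)
  then show ?case unfolding p_def by simp
qed

theorem lemma3p3:
  assumes "group G" and "A \<subseteq> carrier G" and "sequentially_distorted G A"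
  shows "strongly_bounded G A"
  unfolding strongly_bounded_def
proof (intro allI impI)
  fix d assume d: "left_invariant_metric G d"
  have M: "monoid G" using group.is_monoid[OF assms(1)] .
  have oC: "\<one>\<^bsub>G\<^esub> \<in> carrier G" using M by (rule monoid.one_closed)
  obtain w :: "nat \<Rightarrow> nat" where w: "\<forall>a. (\<forall>n. a n \<in> A) \<longrightarrow>
        (\<exists>S. finite S \<and> S \<subseteq> carrier G \<and> (\<forall>n. a n \<in> set_power G S (w n)))"
    using assms(3) unfolding sequentially_distorted_def by (elim exE)
  have "\<exists>B. \<forall>x\<in>A. d \<one>\<^bsub>G\<^esub> x \<le> B"
  proof (rule ccontr)
    assume nb: "\<not> (\<exists>B. \<forall>x\<in>A. d \<one>\<^bsub>G\<^esub> x \<le> B)"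
    have ex: "\<forall>n. \<exists>x. x \<in> A \<and> d \<one>\<^bsub>G\<^esub> x > real (w n) * real n"
    proof
      fix n
      from nb have "\<not> (\<forall>x\<in>A. d \<one>\<^bsub>G\<^esub> x \<le> real (w n) * real n)" by blast
      then show "\<exists>x. x \<in> A \<and> d \<one>\<^bsub>G\<^esub> x > real (w n) * real n" by (auto simp: not_le)
    qed
    obtain a where a: "\<forall>n. a n \<in> A \<and> d \<one>\<^bsub>G\<^esub> (a n) > real (w n) * real n"
      using choice[OF ex] by (elim exE)
    have aA: "\<forall>n. a n \<in> A" using a by simp
    have "\<exists>S. finite S \<and> S \<subseteq> carrier G \<and> (\<forall>n. a n \<in> set_power G S (w n))"
      using w aA by simp
    then obtain S where S: "finite S" "S \<subseteq> carrier G" "\<And>n. a n \<in> set_power G S (w n)"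
      by blast
    define c where "c = Max (insert 0 ((\<lambda>s. d \<one>\<^bsub>G\<^esub> s) ` S))"
    have cb: "\<And>s. s \<in> S \<Longrightarrow> d \<one>\<^bsub>G\<^esub> s \<le> c" unfolding c_def using S(1) by simp
    obtain n :: nat where n: "real n > c" using reals_Archimedean2 by blast
    obtain xs where xs: "a n = foldr (\<lambda>x y. x \<otimes>\<^bsub>G\<^esub> y) xs \<one>\<^bsub>G\<^esub>" "length xs = w n" "set xs \<subseteq> S"
      using S(3)[of n] unfolding set_power_def by blast
    have "d \<one>\<^bsub>G\<^esub> (a n) \<le> real (w n) * c"
      using foldr_bound[OF assms(1) d S(2) cb xs(3)] xs by simp
    moreover have "real (w n) * c \<le> real (w n) * real n" using n by (simp add: mult_left_mono)
    moreover have "d \<one>\<^bsub>G\<^esub> (a n) > real (w n) * real n" using a by simp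
    ultimately show False by linarith
  qed
  then obtain B where B: "\<And>x. x \<in> A \<Longrightarrow> d \<one>\<^bsub>G\<^esub> x \<le> B" by blast
  show "\<exists>M. \<forall>x\<in>A. \<forall>y\<in>A. d x y \<le> M"
  proof (intro exI ballI)
    fix x y assume x: "x \<in> A" and y: "y \<in> A"
    have xC: "x \<in> carrier G" and yC: "y \<in> carrier G" using x y assms(2) by auto
    have "d x y \<le> d x \<one>\<^bsub>G\<^esub> + d \<one>\<^bsub>G\<^esub> y" using lim_tri[OF d xC oC yC] .
    also have "d x \<one>\<^bsub>G\<^esub> = d \<one>\<^bsub>G\<^esub> x" using lim_sym[OF d xC oC] .
    finally have "d x y \<le> d \<one>\<^bsub>G\<^esub> x + d \<one>\<^bsub>G\<^esub> y" .
    moreover have "d \<one>\<^bsub>G\<^esub> x \<le> B" "d \<one>\<^bsub>G\<^esub> y \<le> B" using B x y by auto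
    ultimately show "d x y \<le> B + B" by linarith
  qed
qed

end
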